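(* Let $G$ be a connected chordal graph. Then $BI_d(G)$ is contractible for all integers $d\geq 2$.
   Context: All graphs are finite and simple; $\alpha(G)$ is the independence number and $G[S]$ the induced subgraph on $S$. $BI_d(G)=\{\sigma\subseteq V(G):\ \alpha(G[\sigma])<d\}$. A graph is chordal if it has no induced cycle of length at least $4$. *)

theory Defs
  imports "HOL-Analysis.Analysis"
begin

definition simple_graph :: "'a set \<Rightarrow> ('a \<Rightarrow> 'a \<Rightarrow> bool) \<Rightarrow> bool" where
  "simple_graph V E \<longleftrightarrow> finite V \<and> (\<forall>x y. E x y \<longrightarrow> x \<in> V \<and> y \<in> V)
     \<and> (\<forall>x y. E x y \<longrightarrow> E y x) \<and> (\<forall>x. \<not> E x x)"

definition connected_graph :: "'a set \<Rightarrow> ('a \<Rightarrow> 'a \<Rightarrow> bool) \<Rightarrow> bool" where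
  "connected_graph V E \<longleftrightarrow> V \<noteq> {} \<and> (\<forall>x\<in>V. \<forall>y\<in>V. E\<^sup>*\<^sup>* x y)"

definition induced_cycle :: "'a set \<Rightarrow> ('a \<Rightarrow> 'a \<Rightarrow> bool) \<Rightarrow> 'a list \<Rightarrow> bool" where
  "induced_cycle V E c \<longleftrightarrow> distinct c \<and> set c \<subseteq> V \<and>
     (\<forall>i<length c. \<forall>j<length c.
        E (c!i) (c!j) \<longleftrightarrow> (j = Suc i mod length c \<or> i = Suc j mod length c))"

definition chordal :: "'a set \<Rightarrow> ('a \<Rightarrow> 'a \<Rightarrow> bool) \<Rightarrow> bool" where
  "chordal V E \<longleftrightarrow> \<not> (\<exists>c. length c \<ge> 4 \<and> induced_cycle V E c)"

definition independent :: "('a \<Rightarrow> 'a \<Rightarrow> bool) \<Rightarrow> 'a set \<Rightarrow> bool" where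
  "independent E S \<longleftrightarrow> (\<forall>x\<in>S. \<forall>y\<in>S. \<not> E x y)"

definition indep_num :: "('a \<Rightarrow> 'a \<Rightarrow> bool) \<Rightarrow> 'a set \<Rightarrow> nat" where
  "indep_num E S = Max (card ` {T. T \<subseteq> S \<and> independent E T})"

definition BI :: "nat \<Rightarrow> 'a set \<Rightarrow> ('a \<Rightarrow> 'a \<Rightarrow> bool) \<Rightarrow> 'a set set" where
  "BI d V E = {\<sigma>. \<sigma> \<subseteq> V \<and> indep_num E \<sigma> < d}"

text \<open>Geometric realization of a finite abstract simplicial complex K on vertex
  type 'a: the points f :: 'a \<Rightarrow> real (barycentric coordinates) that are
  nonnegative, sum to 1, and whose support is a face of K.  It carries the
  subspace topology of the product topology on 'a \<Rightarrow> real.\<close>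
definition geom_realization :: "'a set set \<Rightarrow> ('a \<Rightarrow> real) set" where
  "geom_realization K = {f. (\<forall>x. f x \<ge> 0) \<and> {x. f x \<noteq> 0} \<in> K
      \<and> finite {x. f x \<noteq> 0} \<and> sum f {x. f x \<noteq> 0} = 1}"

end

theory Submission
  imports Defs
begin


lemma contractible_by_deformation:
  fixes S T :: "'b::topological_space set"
  assumes "T \<subseteq> S" "contractible T" "homotopic_with_canon (\<lambda>x. True) S S id r" "r ` S \<subseteq> T"
  shows "contractible S"
proof -
  obtain a where hT: "homotopic_with_canon (\<lambda>x. True) T T id (\<lambda>x. a)"
    using assms(2) unfolding contractible_def by blast
  have cr: "continuous_on S r"
    using homotopic_with_imp_continuous[OF assms(3)] by blast
  have "homotopic_with_canon (\<lambda>x. True) S T (id \<circ> r) ((\<lambda>x. a) \<circ> r)"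
    by (rule homotopic_with_compose_continuous_right[OF _ cr]) (use hT assms(4) in auto)
  then have "homotopic_with_canon (\<lambda>x. True) S S r (\<lambda>x. a)"
    using homotopic_with_subset_right[OF _ assms(1)] by (simp add: o_def)
  then show ?thesis unfolding contractible_def
    using homotopic_with_trans[OF assms(3)] by blast
qed

lemma cont_snd_coord: "continuous_on A (\<lambda>p. snd p i :: real)"
  by (rule continuous_on_compose2[OF continuous_on_product_coordinates continuous_on_snd]) auto

definition Hf :: "'a \<Rightarrow> 'a \<Rightarrow> real \<Rightarrow> ('a \<Rightarrow> real) \<Rightarrow> ('a \<Rightarrow> real)" where
  "Hf u v t f = (\<lambda>x. f x + (if x = u then t * f v else 0) - (if x = v then t * f v else 0))"

lemma Hf_cont: "continuous_on A (\<lambda>p. Hf u v (fst p) (snd p))"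
  unfolding Hf_def
  apply (rule continuous_on_coordinatewise_then_product)
  subgoal for i
    by (cases "i = u"; cases "i = v"; simp; intro continuous_intros cont_snd_coord)
  done

lemma homot_from_cont:
  fixes S :: "('a \<Rightarrow> real) set"
  assumes "continuous_on ({0..1::real} \<times> S) h" "h ` ({0..1::real} \<times> S) \<subseteq> S"
    "\<And>x. h (0, x) = x" "\<And>x. h (1,x) = g x"
  shows "homotopic_with_canon (\<lambda>x. True) S S id g"
  unfolding homotopic_with_def
  apply (rule exI[of _ h])
  using assms by (auto simp: continuous_map_subtopology_eu prod_topology_subtopology subtopology_subtopology Times_Int_Times)

lemma sum_supp_V:
  fixes f :: "'a \<Rightarrow> real"
  assumes "finite V" "{x. f x \<noteq> 0} \<subseteq> V"
  shows "sum f {x. f x \<noteq> 0} = sum f V"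
  by (rule sum.mono_neutral_left) (use assms in auto)

lemma Hf_in:
  fixes K :: "'a set set"
  assumes fin: "finite V" and Kpow: "\<forall>\<sigma>\<in>K. \<sigma> \<subseteq> V"
    and down: "\<forall>\<sigma>\<in>K. \<forall>\<tau>. \<tau> \<subseteq> \<sigma> \<longrightarrow> \<tau> \<in> K"
    and uV: "u \<in> V" and vV: "v \<in> V" and uv: "u \<noteq> v"
    and cone: "\<forall>\<sigma>\<in>K. v \<in> \<sigma> \<longrightarrow> insert u \<sigma> \<in> K"
    and f: "f \<in> geom_realization K" and t: "0 \<le> t" "t \<le> 1"
  shows "Hf u v t f \<in> geom_realization K"
proof (cases "f v = 0")
  case True
  then have "Hf u v t f = f" unfolding Hf_def by auto
  then show ?thesis using f by simp
next
  case False
  let ?g = "Hf u v t f"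
  have f0: "\<forall>x. f x \<ge> 0" and fK: "{x. f x \<noteq> 0} \<in> K" and fs: "sum f {x. f x \<noteq> 0} = 1"
    using f unfolding geom_realization_def by auto
  have fV: "{x. f x \<noteq> 0} \<subseteq> V" using fK Kpow by auto
  have vin: "v \<in> {x. f x \<noteq> 0}" using False by simp
  have nn: "\<forall>x. ?g x \<ge> 0"
  proof
    fix x
    have "f v \<ge> 0" "f u \<ge> 0" "f x \<ge> 0" using f0 by auto
    moreover have "t * f v \<le> f v" using t \<open>f v \<ge> 0\<close> by (simp add: mult_left_le_one_le)
    moreover have "t * f v \<ge> 0" using t \<open>f v \<ge> 0\<close> by simp
    ultimately show "?g x \<ge> 0" unfolding Hf_def using uv by auto
  qed
  have gsub: "{x. ?g x \<noteq> 0} \<subseteq> insert u {x. f x \<noteq> 0}"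
    unfolding Hf_def using uv by auto
  have iK: "insert u {x. f x \<noteq> 0} \<in> K" using bspec[OF cone fK] vin by simp
  have gK: "{x. ?g x \<noteq> 0} \<in> K" using bspec[OF down iK] gsub by simp
  have gV: "{x. ?g x \<noteq> 0} \<subseteq> V" using gK Kpow by auto
  have "sum ?g {x. ?g x \<noteq> 0} = sum ?g V" by (rule sum_supp_V[OF fin gV])
  also have "\<dots> = sum f V + (\<Sum>x\<in>V. if x = u then t * f v else 0) - (\<Sum>x\<in>V. if x = v then t * f v else 0)"
    unfolding Hf_def by (simp add: sum.distrib sum_subtractf)
  also have "\<dots> = sum f V" using uV vV fin by simp
  also have "\<dots> = 1" using sum_supp_V[OF fin fV] fs by simp
  finally have "sum ?g {x. ?g x \<noteq> 0} = 1" .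
  moreover have "finite {x. ?g x \<noteq> 0}" using gV fin finite_subset by auto
  ultimately show ?thesis unfolding geom_realization_def
    using nn gK by simp
qed

lemma cone_contractible:
  fixes K :: "'a set set"
  assumes fin: "finite V" and Kpow: "\<forall>\<sigma>\<in>K. \<sigma> \<subseteq> V"
    and down: "\<forall>\<sigma>\<in>K. \<forall>\<tau>. \<tau> \<subseteq> \<sigma> \<longrightarrow> \<tau> \<in> K"
    and uV: "u \<in> V" and vV: "v \<in> V" and uv: "u \<noteq> v"
    and cone: "\<forall>\<sigma>\<in>K. v \<in> \<sigma> \<longrightarrow> insert u \<sigma> \<in> K"
    and c: "contractible (geom_realization {\<sigma>\<in>K. v \<notin> \<sigma>})"
  shows "contractible (geom_realization K)"
proof (rule contractible_by_deformation[OF _ c])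
  show "geom_realization {\<sigma>\<in>K. v \<notin> \<sigma>} \<subseteq> geom_realization K"
    unfolding geom_realization_def by auto
  show "homotopic_with_canon (\<lambda>x. True) (geom_realization K) (geom_realization K) id (Hf u v 1)"
  proof (rule homot_from_cont[where h = "\<lambda>p. Hf u v (fst p) (snd p)"])
    show "continuous_on ({0..1::real} \<times> geom_realization K) (\<lambda>p. Hf u v (fst p) (snd p))"
      by (rule Hf_cont)
    show "(\<lambda>p. Hf u v (fst p) (snd p)) ` ({0..1::real} \<times> geom_realization K) \<subseteq> geom_realization K"
      using Hf_in[OF fin Kpow down uV vV uv cone] by auto
    show "\<And>x. Hf u v (fst (0::real, x)) (snd (0::real, x)) = x" by (simp add: Hf_def fun_eq_iff)
    show "\<And>x. Hf u v (fst (1::real, x)) (snd (1::real, x)) = Hf u v 1 x" by simp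
  qed
  show "Hf u v 1 ` geom_realization K \<subseteq> geom_realization {\<sigma> \<in> K. v \<notin> \<sigma>}"
  proof
    fix g assume "g \<in> Hf u v 1 ` geom_realization K"
    then obtain f where f: "f \<in> geom_realization K" and g: "g = Hf u v 1 f" by auto
    have "g \<in> geom_realization K" using Hf_in[OF fin Kpow down uV vV uv cone f] g by simp
    moreover have "g v = 0" using g uv by (simp add: Hf_def)
    ultimately show "g \<in> geom_realization {\<sigma> \<in> K. v \<notin> \<sigma>}"
      unfolding geom_realization_def by auto
  qed
qed



definition gp :: "('a \<Rightarrow> 'a \<Rightarrow> bool) \<Rightarrow> 'a set \<Rightarrow> 'a \<Rightarrow> 'a \<Rightarrow> 'a list \<Rightarrow> bool" where
  "gp E C s t p \<longleftrightarrow> length p \<ge> 2 \<and> p!0 = s \<and> p!(length p - 1) = t \<and>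
     (\<forall>i. 0 < i \<and> i < length p - 1 \<longrightarrow> p!i \<in> C) \<and> (\<forall>i. Suc i < length p \<longrightarrow> E (p!i) (p!Suc i))"

lemma nth_shortcut:
  assumes "i < j" "j < length p" "k < Suc i + (length p - j)"
  shows "(take (Suc i) p @ drop j p) ! k = (if k \<le> i then p!k else p!(k - Suc i + j))"
  using assms by (auto simp: nth_append min_def) (simp add: add.commute)

lemma gp_shortcut:
  assumes g: "gp E C s t p" and ij: "Suc i < j" "j < length p" and e: "E (p!i) (p!j)"
  shows "gp E C s t (take (Suc i) p @ drop j p) \<and> length (take (Suc i) p @ drop j p) < length p"
proof -
  let ?q = "take (Suc i) p @ drop j p"
  have lq: "length ?q = Suc i + (length p - j)" using ij by simp
  have nq: "\<And>k. k < length ?q \<Longrightarrow> ?q ! k = (if k \<le> i then p!k else p!(k - Suc i + j))"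
    using nth_shortcut[of i j p] ij lq by simp
  have g1: "length p \<ge> 2" "p!0 = s" "p!(length p - 1) = t"
    "\<And>i. 0 < i \<Longrightarrow> i < length p - 1 \<Longrightarrow> p!i \<in> C" "\<And>i. Suc i < length p \<Longrightarrow> E (p!i) (p!Suc i)"
    using g unfolding gp_def by auto
  have "length ?q \<ge> 2" using lq ij by simp
  moreover have "?q!0 = s" using nq[of 0] lq g1 by (cases p) auto
  moreover have "?q!(length ?q - 1) = t"
  proof -
    have "length ?q - 1 < length ?q" using lq by simp
    moreover have "\<not> (length ?q - 1 \<le> i)" using lq ij by simp
    moreover have "length ?q - 1 - Suc i + j = length p - 1" using lq ij by simp
    ultimately show ?thesis using nq[of "length ?q - 1"] g1 by simp
  qed
  moreover have "\<forall>k. 0 < k \<and> k < length ?q - 1 \<longrightarrow> ?q!k \<in> C"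
  proof (intro allI impI)
    fix k assume k: "0 < k \<and> k < length ?q - 1"
    show "?q!k \<in> C"
    proof (cases "k \<le> i")
      case True then show ?thesis using nq[of k] k g1(4)[of k] ij by simp
    next
      case False then show ?thesis using nq[of k] k g1(4)[of "k - Suc i + j"] ij lq by simp
    qed
  qed
  moreover have "\<forall>k. Suc k < length ?q \<longrightarrow> E (?q!k) (?q!Suc k)"
  proof (intro allI impI)
    fix k assume k: "Suc k < length ?q"
    consider "Suc k \<le> i" | "k = i" | "i < k" by linarith
    then show "E (?q!k) (?q!Suc k)"
    proof cases
      case 1 then show ?thesis using nq[of k] nq[of "Suc k"] k g1(5)[of k] ij by simp
    next
      case 2 then show ?thesis using nq[of k] nq[of "Suc k"] k e by simp
    next
      case 3
      then have "Suc (k - Suc i + j) = Suc k - Suc i + j" by simp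
      then show ?thesis using 3 nq[of k] nq[of "Suc k"] k g1(5)[of "k - Suc i + j"] ij lq by simp
    qed
  qed
  ultimately show ?thesis unfolding gp_def using lq ij by simp
qed

lemma gp_min_induced:
  assumes g: "gp E C s t p" and m: "\<forall>q. gp E C s t q \<longrightarrow> length p \<le> length q"
    and ab: "a < b" "b < length p" and e: "E (p!a) (p!b)"
  shows "b = Suc a"
proof (rule ccontr)
  assume "b \<noteq> Suc a"
  then have "Suc a < b" using ab by simp
  from gp_shortcut[OF g this ab(2) e] m show False by fastforce
qed

lemma mod_Suc_lt: "i < n \<Longrightarrow> Suc i mod n = (if Suc i = n then 0 else Suc i)"
  by auto

lemma cycle_from_path:
  assumes sg: "simple_graph V E" and g: "gp E C s t p"
    and m: "\<forall>q. gp E C s t q \<longrightarrow> length p \<le> length q"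
    and st: "s \<noteq> t" and nst: "\<not> E s t" and xs: "E x s" and xt: "E x t"
    and xC: "\<forall>c\<in>C. \<not> E x c" and xnC: "x \<notin> C"
  shows "induced_cycle V E (x # p) \<and> length (x # p) \<ge> 4"
proof -
  have sym: "\<And>a b. E a b \<Longrightarrow> E b a" and irr: "\<And>a. \<not> E a a"
    and inV: "\<And>a b. E a b \<Longrightarrow> a \<in> V \<and> b \<in> V"
    using sg unfolding simple_graph_def by auto
  define L where "L = length p"
  have g1: "L \<ge> 2" "p!0 = s" "p!(L - 1) = t"
    "\<And>i. 0 < i \<Longrightarrow> i < L - 1 \<Longrightarrow> p!i \<in> C" "\<And>i. Suc i < L \<Longrightarrow> E (p!i) (p!Suc i)"
    using g unfolding gp_def L_def by auto
  have L3: "L \<ge> 3"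
  proof (rule ccontr)
    assume "\<not> L \<ge> 3"
    then have "L = 2" using g1 by simp
    then show False using g1(5)[of 0] g1 nst by simp
  qed
  have ind: "\<And>a b. a < b \<Longrightarrow> b < L \<Longrightarrow> E (p!a) (p!b) \<Longrightarrow> b = Suc a"
    using gp_min_induced[OF g m] L_def by blast
  have pind: "\<And>a b. a < L \<Longrightarrow> b < L \<Longrightarrow> (E (p!a) (p!b) \<longleftrightarrow> b = Suc a \<or> a = Suc b)"
  proof -
    fix a b assume ab: "a < L" "b < L"
    show "E (p!a) (p!b) \<longleftrightarrow> b = Suc a \<or> a = Suc b"
    proof
      assume e: "E (p!a) (p!b)"
      consider "a < b" | "a = b" | "b < a" by linarith
      then show "b = Suc a \<or> a = Suc b"
      proof cases
        case 1 then show ?thesis using ind[OF 1 ab(2) e] by simp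
      next
        case 2 then show ?thesis using e irr by simp
      next
        case 3 then show ?thesis using ind[OF 3 ab(1) sym[OF e]] by simp
      qed
    next
      assume "b = Suc a \<or> a = Suc b"
      then show "E (p!a) (p!b)" using g1(5) ab sym by auto
    qed
  qed
  have xadj: "\<And>k. k < L \<Longrightarrow> (E x (p!k) \<longleftrightarrow> k = 0 \<or> k = L - 1)"
  proof -
    fix k assume k: "k < L"
    show "E x (p!k) \<longleftrightarrow> k = 0 \<or> k = L - 1"
    proof
      assume "E x (p!k)"
      then show "k = 0 \<or> k = L - 1" by (cases "0 < k \<and> k < L - 1") (use g1(4)[of k] xC k in auto)
    next
      assume "k = 0 \<or> k = L - 1"
      then show "E x (p!k)" using g1 xs xt by auto
    qed
  qed
  have dist: "distinct p"
  proof -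
    have ne: "p!i \<noteq> p!j" if ij: "i < j" "j < L" for i j
    proof
      assume eq: "p!i = p!j"
      show False
      proof (cases i)
        case 0
        have pj: "p!j = s" using eq 0 g1(2) by metis
        then have "E x (p!j)" using xs by simp
        then have "j = L - 1" using xadj[OF ij(2)] ij 0 by simp
        then show False using pj g1(3) st by simp
      next
        case (Suc i')
        have "E (p!i') (p!j)" using g1(5)[of i'] eq Suc ij by simp
        then show False using pind[of i' j] Suc ij by simp
      qed
    qed
    show ?thesis unfolding distinct_conv_nth
    proof (intro allI impI)
      fix i j assume "i < length p" "j < length p" "i \<noteq> j"
      then show "p!i \<noteq> p!j" using ne[of i j] ne[of j i] L_def by (cases "i < j") auto
    qed
  qed
  have xnp: "x \<notin> set p"
  proof
    assume "x \<in> set p"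
    then obtain k where k: "k < L" "p!k = x" unfolding L_def by (auto simp: in_set_conv_nth)
    show False
    proof (cases "k = 0 \<or> k = L - 1")
      case True then show ?thesis using k g1 xs xt irr by auto
    next
      case False then have "0 < k" "k < L - 1" using k by auto
      then show ?thesis using g1(4)[of k] k xnC by simp
    qed
  qed
  have pV: "set p \<subseteq> V"
  proof
    fix y assume "y \<in> set p"
    then obtain k where k: "k < L" "p!k = y" unfolding L_def by (auto simp: in_set_conv_nth)
    show "y \<in> V"
    proof (cases "Suc k < L")
      case True then show ?thesis using g1(5)[of k] inV k by blast
    next
      case False
      then have "k = Suc (k - 1)" "Suc (k - 1) < L" using k L3 by auto
      then show ?thesis using g1(5)[of "k - 1"] inV k by metis
    qed
  qed
  have xV: "x \<in> V" using inV xs by blast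
  have adj: "\<forall>i<length (x#p). \<forall>j<length (x#p).
        E ((x#p)!i) ((x#p)!j) \<longleftrightarrow> (j = Suc i mod length (x#p) \<or> i = Suc j mod length (x#p))"
  proof (intro allI impI)
    fix i j assume i: "i < length (x#p)" and j: "j < length (x#p)"
    have pne: "p \<noteq> []" using L3 L_def by auto
    have len: "length (x#p) = Suc L" using L_def by simp
    have mS: "\<And>k. k < L \<Longrightarrow> Suc (Suc k) mod Suc L = (if k = L - 1 then 0 else Suc (Suc k))"
      using L3 by auto
    have m1: "Suc 0 mod Suc L = 1" using L3 by simp
    show "E ((x#p)!i) ((x#p)!j) \<longleftrightarrow> (j = Suc i mod length (x#p) \<or> i = Suc j mod length (x#p))"
    proof (cases i)
      case 0
      then show ?thesis
      proof (cases j)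
        case 0 then show ?thesis using \<open>i = 0\<close> irr m1 pne by (simp add: L_def[symmetric])
      next
        case (Suc j')
        then have j': "j' < L" using j len by simp
        show ?thesis using \<open>i = 0\<close> Suc xadj[OF j'] mS[OF j'] m1 pne by (simp add: L_def[symmetric])
      qed
    next
      case (Suc i')
      then have i': "i' < L" using i len by simp
      show ?thesis
      proof (cases j)
        case 0 then show ?thesis using Suc xadj[OF i'] mS[OF i'] m1 sym by (auto simp add: L_def[symmetric])
      next
        case (Suc j')
        then have j': "j' < L" using j len by simp
        show ?thesis using \<open>i = Suc i'\<close> Suc pind[OF i' j'] mS[OF i'] mS[OF j'] i' j' by (auto simp add: L_def[symmetric])
      qed
    qed
  qed
  show ?thesis unfolding induced_cycle_def using dist xnp pV xV adj L3 L_def by simp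
qed



definition clq :: "('a \<Rightarrow> 'a \<Rightarrow> bool) \<Rightarrow> 'a set \<Rightarrow> bool" where
  "clq E A \<longleftrightarrow> (\<forall>a\<in>A. \<forall>b\<in>A. a \<noteq> b \<longrightarrow> E a b)"
definition NC :: "('a \<Rightarrow> 'a \<Rightarrow> bool) \<Rightarrow> 'a set \<Rightarrow> 'a set" where
  "NC E C = {s. s \<notin> C \<and> (\<exists>c\<in>C. E s c)}"
definition rst :: "('a \<Rightarrow> 'a \<Rightarrow> bool) \<Rightarrow> 'a set \<Rightarrow> 'a \<Rightarrow> 'a \<Rightarrow> bool" where
  "rst E W = (\<lambda>a b. E a b \<and> a \<in> W \<and> b \<in> W)"
definition Wx :: "'a set \<Rightarrow> ('a \<Rightarrow> 'a \<Rightarrow> bool) \<Rightarrow> 'a \<Rightarrow> 'a set" where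
  "Wx V E x = {z\<in>V. z \<noteq> x \<and> \<not> E x z}"
definition gcomp :: "('a \<Rightarrow> 'a \<Rightarrow> bool) \<Rightarrow> 'a set \<Rightarrow> 'a \<Rightarrow> 'a set" where
  "gcomp E W y = {z. (rst E W)\<^sup>*\<^sup>* y z}"

lemma gcomp_sub: assumes "y \<in> W" shows "gcomp E W y \<subseteq> W"
proof
  fix z assume "z \<in> gcomp E W y"
  then have "(rst E W)\<^sup>*\<^sup>* y z" unfolding gcomp_def by simp
  then show "z \<in> W" using assms by (induct rule: rtranclp_induct) (auto simp: rst_def)
qed

lemma gcomp_self: "y \<in> gcomp E W y" unfolding gcomp_def by simp

lemma gcomp_closed:
  assumes "y \<in> W" "z \<in> gcomp E W y" "E z w" "w \<in> W"
  shows "w \<in> gcomp E W y"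
proof -
  have "z \<in> W" using gcomp_sub[OF assms(1)] assms(2) by blast
  then have "rst E W z w" using assms unfolding rst_def by simp
  then show ?thesis using assms(2) unfolding gcomp_def by (simp add: rtranclp.rtrancl_into_rtrancl)
qed

lemma rst_sym:
  assumes "\<And>a b. E a b \<Longrightarrow> E b a" "(rst E W)\<^sup>*\<^sup>* a b"
  shows "(rst E W)\<^sup>*\<^sup>* b a"
  using assms(2)
proof (induct rule: rtranclp_induct)
  case base then show ?case by simp
next
  case (step y z)
  then have "rst E W z y" using assms(1) unfolding rst_def by auto
  then show ?case using step(3) by (simp add: converse_rtranclp_into_rtranclp)
qed

lemma walk_exists:
  assumes "(rst E W)\<^sup>*\<^sup>* c z" "E s c" "c \<in> C" "\<forall>a b. a \<in> C \<longrightarrow> rst E W a b \<longrightarrow> b \<in> C"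
  shows "\<exists>p. length p \<ge> 2 \<and> p!0 = s \<and> p!(length p - 1) = z \<and> (\<forall>i. 0 < i \<and> i < length p \<longrightarrow> p!i \<in> C)
     \<and> (\<forall>i. Suc i < length p \<longrightarrow> E (p!i) (p!Suc i))"
  using assms(1)
proof (induct rule: rtranclp_induct)
  case base
  show ?case
    by (rule exI[of _ "[s, c]"]) (use assms in \<open>auto simp: less_Suc_eq nth_Cons'\<close>)
next
  case (step b w)
  then obtain p where p: "length p \<ge> 2" "p!0 = s" "p!(length p - 1) = b"
    "\<forall>i. 0 < i \<and> i < length p \<longrightarrow> p!i \<in> C" "\<forall>i. Suc i < length p \<longrightarrow> E (p!i) (p!Suc i)" by blast
  have bC: "b \<in> C" using p(3) p(4)[rule_format, of "length p - 1"] p(1) by simp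
  have wC: "w \<in> C" using assms(4) bC step(2) by blast
  have Ew: "E b w" using step(2) unfolding rst_def by simp
  show ?case
  proof (rule exI[of _ "p @ [w]"], intro conjI allI impI)
    show "2 \<le> length (p @ [w])" using p by simp
    show "(p @ [w]) ! 0 = s" using p by (cases p) (auto simp: nth_append)
    show "(p @ [w]) ! (length (p @ [w]) - 1) = w" by simp
    fix i
    show "0 < i \<and> i < length (p @ [w]) \<Longrightarrow> (p @ [w]) ! i \<in> C"
      using p(4) wC by (auto simp: nth_append)
    assume i: "Suc i < length (p @ [w])"
    show "E ((p @ [w]) ! i) ((p @ [w]) ! Suc i)"
    proof (cases "Suc i < length p")
      case True then show ?thesis using p(5) by (simp add: nth_append)
    next
      case False
      then have "i = length p - 1" "Suc i = length p" using i by auto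
      then show ?thesis using p(3) Ew by (simp add: nth_append)
    qed
  qed
qed



lemma sep_clique:
  assumes sg: "simple_graph V E" and ch: "chordal V E" and yV: "y \<in> V"
    and xy: "x \<noteq> y" and nxy: "\<not> E x y"
  shows "clq E (NC E (gcomp E (Wx V E x) y))"
proof -
  have sym: "\<And>a b. E a b \<Longrightarrow> E b a" and irr: "\<And>a. \<not> E a a"
    and inV: "\<And>a b. E a b \<Longrightarrow> a \<in> V \<and> b \<in> V"
    using sg unfolding simple_graph_def by auto
  define W where "W = Wx V E x"
  define C where "C = gcomp E W y"
  have yW: "y \<in> W" using yV xy nxy unfolding W_def Wx_def by auto
  have CW: "C \<subseteq> W" using gcomp_sub[OF yW] C_def by simp
  have xnC: "x \<notin> C" using CW unfolding W_def Wx_def by auto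
  have xC: "\<forall>c\<in>C. \<not> E x c" using CW unfolding W_def Wx_def by auto
  have closed: "\<forall>a b. a \<in> C \<longrightarrow> rst E W a b \<longrightarrow> b \<in> C"
    using gcomp_closed[OF yW] unfolding C_def rst_def by blast
  have inN: "E x s" if s: "s \<in> NC E C" for s
  proof (rule ccontr)
    assume nxs: "\<not> E x s"
    obtain c where c: "c \<in> C" "E s c" using s unfolding NC_def by auto
    have "s \<noteq> x" using c xC by auto
    moreover have "s \<in> V" using inV c by blast
    ultimately have "s \<in> W" using nxs unfolding W_def Wx_def by auto
    then have "s \<in> C" using gcomp_closed[OF yW] c sym unfolding C_def by blast
    then show False using s unfolding NC_def by auto
  qed
  show ?thesis unfolding clq_def C_def[symmetric] W_def[symmetric]
  proof (intro ballI impI)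
    fix s t assume s: "s \<in> NC E C" and t: "t \<in> NC E C" and st: "s \<noteq> t"
    show "E s t"
    proof (rule ccontr)
      assume nst: "\<not> E s t"
      obtain c1 where c1: "c1 \<in> C" "E s c1" using s unfolding NC_def by auto
      obtain c2 where c2: "c2 \<in> C" "E t c2" using t unfolding NC_def by auto
      have "(rst E W)\<^sup>*\<^sup>* y c1" "(rst E W)\<^sup>*\<^sup>* y c2" using c1 c2 unfolding C_def gcomp_def by auto
      then have "(rst E W)\<^sup>*\<^sup>* c1 c2" using rst_sym[of E] sym by (meson rtranclp_trans)
      from walk_exists[OF this c1(2) c1(1) closed] obtain p0 where p0: "length p0 \<ge> 2" "p0!0 = s"
        "p0!(length p0 - 1) = c2" "\<forall>i. 0 < i \<and> i < length p0 \<longrightarrow> p0!i \<in> C"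
        "\<forall>i. Suc i < length p0 \<longrightarrow> E (p0!i) (p0!Suc i)" by blast
      have "gp E C s t (p0 @ [t])"
        unfolding gp_def
      proof (intro conjI allI impI)
        show "2 \<le> length (p0 @ [t])" using p0 by simp
        show "(p0 @ [t]) ! 0 = s" using p0 by (cases p0) (auto simp: nth_append)
        show "(p0 @ [t]) ! (length (p0 @ [t]) - 1) = t" by simp
        fix i
        show "0 < i \<and> i < length (p0 @ [t]) - 1 \<Longrightarrow> (p0 @ [t]) ! i \<in> C"
          using p0(4) by (auto simp: nth_append)
        assume i: "Suc i < length (p0 @ [t])"
        show "E ((p0 @ [t]) ! i) ((p0 @ [t]) ! Suc i)"
        proof (cases "Suc i < length p0")
          case True then show ?thesis using p0(5) by (simp add: nth_append)
        next
          case False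
          then have "i = length p0 - 1" "Suc i = length p0" using i by auto
          then show ?thesis using p0(3) c2 sym by (simp add: nth_append)
        qed
      qed
      from ex_has_least_nat[of "gp E C s t", OF this, of length]
      obtain p where p: "gp E C s t p" "\<forall>q. gp E C s t q \<longrightarrow> length p \<le> length q" by blast
      have "induced_cycle V E (x # p) \<and> length (x # p) \<ge> 4"
        by (rule cycle_from_path[OF sg p(1) p(2) st nst inN[OF s] inN[OF t] xC xnC])
      then show False using ch unfolding chordal_def by blast
    qed
  qed
qed



lemma clq_sub: "clq E A \<Longrightarrow> a \<in> A \<Longrightarrow> A \<subseteq> insert a {z. E a z}"
  unfolding clq_def by auto

lemma clq_E: "clq E A \<Longrightarrow> a \<in> A \<Longrightarrow> b \<in> A \<Longrightarrow> a \<noteq> b \<Longrightarrow> E a b"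
  unfolding clq_def by auto

lemma simplicial_in:
  assumes sg: "simple_graph V E" and ch: "chordal V E"
  shows "C \<subseteq> V \<Longrightarrow> C \<noteq> {} \<Longrightarrow> clq E (NC E C) \<Longrightarrow> \<exists>v\<in>C. clq E {w. E v w}"
proof (induct "card C" arbitrary: C rule: less_induct)
  case less
  have sym: "\<And>a b. E a b \<Longrightarrow> E b a" and irr: "\<And>a. \<not> E a a" and finV: "finite V"
    using sg unfolding simple_graph_def by auto
  have finC: "finite C" using less(2) finV finite_subset by blast
  show ?case
  proof (cases "clq E (C \<union> NC E C)")
    case True
    obtain v where v: "v \<in> C" using less(3) by blast
    have "{w. E v w} \<subseteq> C \<union> NC E C" using v sym unfolding NC_def by auto
    then have "clq E {w. E v w}" using True unfolding clq_def by blast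
    then show ?thesis using v by blast
  next
    case False
    then obtain p q where pq: "p \<in> C \<union> NC E C" "q \<in> C \<union> NC E C" "p \<noteq> q" "\<not> E p q"
      unfolding clq_def by blast
    have NCC: "NC E C \<inter> C = {}" unfolding NC_def by auto
    have "\<exists>x y. x \<in> C \<union> NC E C \<and> y \<in> C \<and> x \<noteq> y \<and> \<not> E x y \<and> NC E C \<subseteq> insert x {z. E x z}"
    proof (cases "p \<in> NC E C")
      case pN: True
      show ?thesis
      proof (cases "q \<in> NC E C")
        case True
        have False using clq_E[OF less(4) pN True pq(3)] pq(4) by simp
        then show ?thesis ..
      next
        case False
        then have qC: "q \<in> C" using pq(2) by blast
        have sub: "NC E C \<subseteq> insert p {z. E p z}" using clq_sub[OF less(4) pN] .
        show ?thesis by (rule exI[of _ p], rule exI[of _ q]) (use pq qC sub in simp)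
      qed
    next
      case pC: False
      then have pC': "p \<in> C" using pq(1) by blast
      show ?thesis
      proof (cases "q \<in> NC E C")
        case True
        have sub: "NC E C \<subseteq> insert q {z. E q z}" using clq_sub[OF less(4) True] .
        have nqp: "\<not> E q p" using pq(4) sym by metis
        show ?thesis by (rule exI[of _ q], rule exI[of _ p]) (use pq pC' sub True nqp in simp)
      next
        case False
        then have qC: "q \<in> C" using pq(2) by blast
        show ?thesis
        proof (cases "\<exists>s\<in>NC E C. \<exists>c\<in>C. \<not> E s c")
          case True
          then obtain s c where sc: "s \<in> NC E C" "c \<in> C" "\<not> E s c" by blast
          have snc: "s \<noteq> c" using sc NCC by blast
          have sub: "NC E C \<subseteq> insert s {z. E s z}"
          proof
            fix z assume z: "z \<in> NC E C"
            show "z \<in> insert s {z. E s z}"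
            proof (cases "z = s")
              case False
              then have "E s z" using less(4) sc(1) z unfolding clq_def by metis
              then show ?thesis by simp
            qed simp
          qed
          have s1: "s \<in> C \<union> NC E C" using sc(1) by (rule UnI2)
          show ?thesis
            apply (rule exI[of _ s], rule exI[of _ c])
            using s1 sc(2) snc sc(3) sub by (intro conjI)
        next
          case False
          have sub: "NC E C \<subseteq> insert p {z. E p z}"
          proof
            fix z assume "z \<in> NC E C"
            then have "E z p" using False pC' by blast
            then have "E p z" by (rule sym)
            then show "z \<in> insert p {z. E p z}" by simp
          qed
          show ?thesis by (rule exI[of _ p], rule exI[of _ q]) (use pq pC' qC sub in simp)
        qed
      qed
    qed
    then obtain x y where xy: "x \<in> C \<union> NC E C" "y \<in> C" "x \<noteq> y" "\<not> E x y"
      "NC E C \<subseteq> insert x {z. E x z}" by blast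
    define W where "W = Wx V E x"
    define C' where "C' = gcomp E W y"
    have yV: "y \<in> V" using xy less(2) by blast
    have yW: "y \<in> W" using yV xy unfolding W_def Wx_def by auto
    have cl: "clq E (NC E C')" using sep_clique[OF sg ch yV xy(3) xy(4)] unfolding C'_def W_def .
    have C'W: "C' \<subseteq> W" using gcomp_sub[OF yW] C'_def by simp
    have C'C: "C' \<subseteq> C"
    proof
      fix z assume "z \<in> C'"
      then have "(rst E W)\<^sup>*\<^sup>* y z" unfolding C'_def gcomp_def by simp
      then show "z \<in> C"
      proof (induct rule: rtranclp_induct)
        case base then show ?case using xy by simp
      next
        case (step b w)
        show ?case
        proof (rule ccontr)
          assume "w \<notin> C"
          then have "w \<in> NC E C" using step sym unfolding NC_def rst_def by blast
          then have "w = x \<or> E x w" using xy(5) by blast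
          then show False using step(2) unfolding rst_def W_def Wx_def by auto
        qed
      qed
    qed
    have "\<exists>c\<in>C. c \<notin> C'"
    proof (cases "x \<in> C")
      case True then show ?thesis using C'W unfolding W_def Wx_def by auto
    next
      case False
      then obtain c where "c \<in> C" "E x c" using xy(1) unfolding NC_def by auto
      then show ?thesis using C'W unfolding W_def Wx_def by auto
    qed
    then have "C' \<subset> C" using C'C by blast
    then have "card C' < card C" using finC psubset_card_mono by blast
    moreover have "C' \<subseteq> V" using C'C less(2) by blast
    moreover have "C' \<noteq> {}" using gcomp_self[of y E W] C'_def by auto
    ultimately obtain v where "v \<in> C'" "clq E {w. E v w}" using less(1) cl by blast
    then show ?thesis using C'C by blast
  qed
qed

lemma exists_dominated:
  assumes sg: "simple_graph V E" and ch: "chordal V E" and co: "connected_graph V E"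
    and c2: "card V \<ge> 2"
  shows "\<exists>v u. v \<in> V \<and> E v u \<and> clq E {w. E v w}"
proof -
  have sym: "\<And>a b. E a b \<Longrightarrow> E b a" and irr: "\<And>a. \<not> E a a" and finV: "finite V"
    and inV: "\<And>a b. E a b \<Longrightarrow> a \<in> V \<and> b \<in> V"
    using sg unfolding simple_graph_def by auto
  have nb: "\<exists>u. E v u" if v: "v \<in> V" for v
  proof -
    obtain z where z: "z \<in> V" "z \<noteq> v"
    proof -
      have "\<not> V \<subseteq> {v}"
      proof
        assume "V \<subseteq> {v}"
        then have "card V \<le> 1" using card_mono[of "{v}" V] by simp
        then show False using c2 by simp
      qed
      then show ?thesis using that by blast
    qed
    have "E\<^sup>*\<^sup>* v z" using co v z unfolding connected_graph_def by blast
    then show ?thesis using z(2) by (metis converse_rtranclpE)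
  qed
  obtain v where v: "v \<in> V" "clq E {w. E v w}"
  proof (cases "clq E V")
    case True
    obtain v where "v \<in> V" using co unfolding connected_graph_def by blast
    moreover have "{w. E v w} \<subseteq> V" using inV by blast
    ultimately show ?thesis using that True unfolding clq_def by blast
  next
    case False
    then obtain x y where xy: "x \<in> V" "y \<in> V" "x \<noteq> y" "\<not> E x y" unfolding clq_def by blast
    define C where "C = gcomp E (Wx V E x) y"
    have yW: "y \<in> Wx V E x" using xy unfolding Wx_def by auto
    have "C \<subseteq> V" using gcomp_sub[OF yW] C_def unfolding Wx_def by auto
    moreover have "C \<noteq> {}" using gcomp_self[of y E "Wx V E x"] C_def by auto
    moreover have "clq E (NC E C)" using sep_clique[OF sg ch xy(2) xy(3) xy(4)] C_def by simp
    ultimately obtain v where "v \<in> C" "clq E {w. E v w}" using simplicial_in[OF sg ch] by blast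
    then show ?thesis using that \<open>C \<subseteq> V\<close> by blast
  qed
  then show ?thesis using nb by blast
qed



lemma contractible_sub_sing:
  fixes S :: "'b::topological_space set"
  assumes "S \<subseteq> {a}" shows "contractible S"
proof (cases "S = {}")
  case True then show ?thesis by simp
next
  case False
  then have S: "S = {a}" using assms by blast
  have "homotopic_with_canon (\<lambda>x. True) {a} {a} id (\<lambda>x. a)"
    by (rule homotopic_with_equal) auto
  then show ?thesis unfolding contractible_def S by blast
qed

lemma indep_fin:
  assumes "finite S"
  shows "finite (card ` {T. T \<subseteq> S \<and> independent E T})" "card ` {T. T \<subseteq> S \<and> independent E T} \<noteq> {}"
proof -
  show "finite (card ` {T. T \<subseteq> S \<and> independent E T})" using assms by simp
  have "{} \<in> {T. T \<subseteq> S \<and> independent E T}" unfolding independent_def by simp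
  then show "card ` {T. T \<subseteq> S \<and> independent E T} \<noteq> {}" by blast
qed

lemma indep_num_mono:
  assumes "finite S'" "S \<subseteq> S'"
  shows "indep_num E S \<le> indep_num E S'"
proof -
  have fS: "finite S" using assms finite_subset by blast
  show ?thesis unfolding indep_num_def
    by (rule Max_mono) (use indep_fin[OF fS] indep_fin[OF assms(1)] assms(2) in auto)
qed

lemma indep_num_ge:
  assumes "finite S" "T \<subseteq> S" "independent E T"
  shows "card T \<le> indep_num E S"
  unfolding indep_num_def by (rule Max_ge) (use indep_fin[OF assms(1)] assms in auto)

lemma BI_down:
  assumes "finite V"
  shows "\<forall>\<sigma>\<in>BI d V E. \<forall>\<tau>. \<tau> \<subseteq> \<sigma> \<longrightarrow> \<tau> \<in> BI d V E"
proof (intro ballI allI impI)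
  fix \<sigma> \<tau> assume s: "\<sigma> \<in> BI d V E" and t: "\<tau> \<subseteq> \<sigma>"
  have "finite \<sigma>" using s assms unfolding BI_def using finite_subset by auto
  then have "indep_num E \<tau> \<le> indep_num E \<sigma>" using indep_num_mono t by blast
  then show "\<tau> \<in> BI d V E" using s t unfolding BI_def by auto
qed

lemma BI_cone:
  assumes sg: "simple_graph V E" and uV: "u \<in> V" and vu: "E v u" and cl: "clq E {w. E v w}"
  shows "\<forall>\<sigma>\<in>BI d V E. v \<in> \<sigma> \<longrightarrow> insert u \<sigma> \<in> BI d V E"
proof (intro ballI impI)
  fix \<sigma> assume s: "\<sigma> \<in> BI d V E" and v: "v \<in> \<sigma>"
  have sym: "\<And>a b. E a b \<Longrightarrow> E b a" and irr: "\<And>a. \<not> E a a" and finV: "finite V"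
    using sg unfolding simple_graph_def by auto
  have sV: "\<sigma> \<subseteq> V" and sd: "indep_num E \<sigma> < d" using s unfolding BI_def by auto
  have fs: "finite \<sigma>" using sV finV finite_subset by blast
  have fis: "finite (insert u \<sigma>)" using fs by simp
  have "indep_num E (insert u \<sigma>) \<le> indep_num E \<sigma>"
    unfolding indep_num_def[of E "insert u \<sigma>"]
  proof (rule Max.boundedI)
    show "finite (card ` {T. T \<subseteq> insert u \<sigma> \<and> independent E T})" using indep_fin[OF fis] by simp
    show "card ` {T. T \<subseteq> insert u \<sigma> \<and> independent E T} \<noteq> {}" using indep_fin[OF fis] by simp
    fix k assume "k \<in> card ` {T. T \<subseteq> insert u \<sigma> \<and> independent E T}"
    then obtain T where T: "T \<subseteq> insert u \<sigma>" "independent E T" "k = card T" by auto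
    have fT: "finite T" using T(1) fis finite_subset by blast
    show "k \<le> indep_num E \<sigma>"
    proof (cases "u \<in> T")
      case False
      then have "T \<subseteq> \<sigma>" using T(1) by blast
      then show ?thesis using indep_num_ge[OF fs _ T(2)] T(3) by simp
    next
      case True
      have vT: "v \<notin> T" using True T(2) vu unfolding independent_def by blast
      define T' where "T' = insert v (T - {u})"
      have T'sub: "T' \<subseteq> \<sigma>" using T(1) v unfolding T'_def by blast
      have "independent E T'" unfolding independent_def
      proof (intro ballI)
        fix a b assume a: "a \<in> T'" and b: "b \<in> T'"
        have noadj: "\<not> E v c" if c: "c \<in> T - {u}" for c
        proof
          assume "E v c"
          then have "E u c" using clq_E[OF cl, of u c] vu c by auto
          then show False using T(2) True c unfolding independent_def by blast
        qed
        show "\<not> E a b"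
        proof (cases "a = v")
          case av: True
          show ?thesis
          proof (cases "b = v")
            case True then show ?thesis using av irr by simp
          next
            case False then have "b \<in> T - {u}" using b unfolding T'_def by blast
            then show ?thesis using av noadj by simp
          qed
        next
          case anv: False
          then have aT: "a \<in> T - {u}" using a unfolding T'_def by blast
          show ?thesis
          proof (cases "b = v")
            case True then show ?thesis using noadj[OF aT] sym by blast
          next
            case False then have "b \<in> T - {u}" using b unfolding T'_def by blast
            then show ?thesis using aT T(2) unfolding independent_def by blast
          qed
        qed
      qed
      moreover have "card T' = card T"
      proof -
        have "card T > 0" using True fT card_gt_0_iff by blast
        then show ?thesis unfolding T'_def using vT True fT by (simp add: card.insert_remove)
      qed
      ultimately show ?thesis using indep_num_ge[OF fs T'sub] T(3) by simp
    qed
  qed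
  then show "insert u \<sigma> \<in> BI d V E" using sV uV sd unfolding BI_def by simp
qed



definition gdel :: "('a \<Rightarrow> 'a \<Rightarrow> bool) \<Rightarrow> 'a \<Rightarrow> 'a \<Rightarrow> 'a \<Rightarrow> bool" where
  "gdel E v = (\<lambda>a b. E a b \<and> a \<noteq> v \<and> b \<noteq> v)"

lemma del_simple: "simple_graph V E \<Longrightarrow> simple_graph (V - {v}) (gdel E v)"
  unfolding simple_graph_def gdel_def by auto

lemma del_chordal:
  assumes "chordal V E" shows "chordal (V - {v}) (gdel E v)"
  unfolding chordal_def
proof
  assume "\<exists>c. 4 \<le> length c \<and> induced_cycle (V - {v}) (gdel E v) c"
  then obtain c where c: "4 \<le> length c" "induced_cycle (V - {v}) (gdel E v) c" by blast
  have sub: "set c \<subseteq> V - {v}" using c(2) unfolding induced_cycle_def by simp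
  have eq: "\<And>i j. i < length c \<Longrightarrow> j < length c \<Longrightarrow> gdel E v (c!i) (c!j) = E (c!i) (c!j)"
  proof -
    fix i j assume "i < length c" "j < length c"
    then have "c!i \<in> V - {v}" "c!j \<in> V - {v}" using sub nth_mem by (blast, blast)
    then show "gdel E v (c!i) (c!j) = E (c!i) (c!j)" unfolding gdel_def by auto
  qed
  have "induced_cycle V E c"
    using c(2) eq sub unfolding induced_cycle_def by auto
  then show False using assms c(1) unfolding chordal_def by blast
qed

lemma del_BI:
  shows "BI d (V - {v}) (gdel E v) = {\<sigma> \<in> BI d V E. v \<notin> \<sigma>}"
proof -
  have eqn: "indep_num (gdel E v) \<sigma> = indep_num E \<sigma>" if "v \<notin> \<sigma>" for \<sigma>
  proof -
    have "{T. T \<subseteq> \<sigma> \<and> independent (gdel E v) T} = {T. T \<subseteq> \<sigma> \<and> independent E T}"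
      using that unfolding independent_def gdel_def by blast
    then show ?thesis unfolding indep_num_def by simp
  qed
  show ?thesis unfolding BI_def
  proof (intro set_eqI iffI)
    fix \<sigma> assume a: "\<sigma> \<in> {\<sigma>. \<sigma> \<subseteq> V - {v} \<and> indep_num (gdel E v) \<sigma> < d}"
    then have "v \<notin> \<sigma>" by blast
    then show "\<sigma> \<in> {\<sigma> \<in> {\<sigma>. \<sigma> \<subseteq> V \<and> indep_num E \<sigma> < d}. v \<notin> \<sigma>}" using a eqn[of \<sigma>] by auto
  next
    fix \<sigma> assume a: "\<sigma> \<in> {\<sigma> \<in> {\<sigma>. \<sigma> \<subseteq> V \<and> indep_num E \<sigma> < d}. v \<notin> \<sigma>}"
    then have "v \<notin> \<sigma>" by blast
    then show "\<sigma> \<in> {\<sigma>. \<sigma> \<subseteq> V - {v} \<and> indep_num (gdel E v) \<sigma> < d}" using a eqn[of \<sigma>] by auto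
  qed
qed

lemma del_connected:
  assumes sg: "simple_graph V E" and co: "connected_graph V E" and c2: "card V \<ge> 2"
    and vV: "v \<in> V" and vu: "E v u" and cl: "clq E {w. E v w}"
  shows "connected_graph (V - {v}) (gdel E v)"
proof -
  have sym: "\<And>a b. E a b \<Longrightarrow> E b a" and irr: "\<And>a. \<not> E a a" and finV: "finite V"
    using sg unfolding simple_graph_def by auto
  have uv: "u \<noteq> v" using vu irr by blast
  have ne: "V - {v} \<noteq> {}"
  proof
    assume "V - {v} = {}"
    then have "V \<subseteq> {v}" by blast
    then have "card V \<le> 1" using card_mono[of "{v}" V] by simp
    then show False using c2 by simp
  qed
  have "(gdel E v)\<^sup>*\<^sup>* x y" if x: "x \<in> V - {v}" and y: "y \<in> V - {v}" for x y
  proof -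
    have "E\<^sup>*\<^sup>* x y" using co x y unfolding connected_graph_def by blast
    then have "if y = v then (gdel E v)\<^sup>*\<^sup>* x u else (gdel E v)\<^sup>*\<^sup>* x y"
    proof (induct rule: rtranclp_induct)
      case base then show ?case using x by simp
    next
      case (step b w)
      show ?case
      proof (cases "b = v")
        case True
        then have wv: "w \<noteq> v" using step(2) irr by blast
        have r: "(gdel E v)\<^sup>*\<^sup>* x u" using step(3) True by simp
        have "E v w" using step(2) True by simp
        show ?thesis
        proof (cases "w = u")
          case True then show ?thesis using r wv by simp
        next
          case False
          then have "E u w" using clq_E[OF cl, of u w] vu \<open>E v w\<close> by simp
          then have "gdel E v u w" unfolding gdel_def using uv wv by simp
          then show ?thesis using r wv by (simp add: rtranclp.rtrancl_into_rtrancl)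
        qed
      next
        case False
        have r: "(gdel E v)\<^sup>*\<^sup>* x b" using step(3) False by simp
        show ?thesis
        proof (cases "w = v")
          case True
          have "E v b" using step(2) True sym by blast
          show ?thesis
          proof (cases "b = u")
            case bu: True then show ?thesis using r True by simp
          next
            case bu: False
            then have "E b u" using clq_E[OF cl, of b u] vu \<open>E v b\<close> by simp
            then have "gdel E v b u" unfolding gdel_def using uv False by simp
            then show ?thesis using r True by (simp add: rtranclp.rtrancl_into_rtrancl)
          qed
        next
          case wv: False
          then have "gdel E v b w" unfolding gdel_def using step(2) False by simp
          then show ?thesis using r wv by (simp add: rtranclp.rtrancl_into_rtrancl)
        qed
      qed
    qed
    then show ?thesis using y by simp
  qed
  then show ?thesis unfolding connected_graph_def using ne by blast
qed

lemma main_aux: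
  "simple_graph V E \<Longrightarrow> connected_graph V E \<Longrightarrow> chordal V E \<Longrightarrow> contractible (geom_realization (BI d V E))"
proof (induct "card V" arbitrary: V E rule: less_induct)
  case less
  have sym: "\<And>a b. E a b \<Longrightarrow> E b a" and irr: "\<And>a. \<not> E a a" and finV: "finite V"
    and inV: "\<And>a b. E a b \<Longrightarrow> a \<in> V \<and> b \<in> V"
    using less(2) unfolding simple_graph_def by auto
  have Kpow: "\<forall>\<sigma>\<in>BI d V E. \<sigma> \<subseteq> V" unfolding BI_def by auto
  show ?case
  proof (cases "card V \<ge> 2")
    case True
    obtain v u where vu: "v \<in> V" "E v u" "clq E {w. E v w}"
      using exists_dominated[OF less(2) less(4) less(3) True] by blast
    have uV: "u \<in> V" using inV vu(2) by blast
    have uv: "u \<noteq> v" using vu(2) irr by blast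
    have "card V > 0" using vu(1) finV card_gt_0_iff by blast
    then have "card (V - {v}) < card V" using vu(1) finV by simp
    have "contractible (geom_realization (BI d (V - {v}) (gdel E v)))"
      by (rule less(1)[OF \<open>card (V - {v}) < card V\<close> del_simple[OF less(2)] del_connected[OF less(2) less(3) True vu] del_chordal[OF less(4)]])
    then have c: "contractible (geom_realization {\<sigma> \<in> BI d V E. v \<notin> \<sigma>})" by (simp only: del_BI)
    show ?thesis
      by (rule cone_contractible[OF finV Kpow BI_down[OF finV] uV vu(1) uv BI_cone[OF less(2) uV vu(2) vu(3)] c])
  next
    case False
    have "V \<noteq> {}" using less(3) unfolding connected_graph_def by simp
    then have "card V > 0" using finV by (simp add: card_gt_0_iff)
    then have "card V = 1" using False by simp
    then obtain w where Vw: "V = {w}" using card_1_singleton_iff[of V] by auto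
    have "geom_realization (BI d V E) \<subseteq> {\<lambda>x. if x = w then 1 else 0}"
    proof
      fix f assume f: "f \<in> geom_realization (BI d V E)"
      have fK: "{x. f x \<noteq> 0} \<in> BI d V E" and s1: "sum f {x. f x \<noteq> 0} = 1"
        using f unfolding geom_realization_def by blast+
      have sK: "{x. f x \<noteq> 0} \<subseteq> {w}" using bspec[OF Kpow fK] Vw by simp
      have "{x. f x \<noteq> 0} \<noteq> {}"
      proof
        assume "{x. f x \<noteq> 0} = {}"
        then show False using s1 by simp
      qed
      then have sw: "{x. f x \<noteq> 0} = {w}" using sK by blast
      have fw: "f w = 1" using s1 unfolding sw by simp
      have fo: "f x = 0" if "x \<noteq> w" for x
      proof (rule ccontr)
        assume "f x \<noteq> 0"
        then have "x \<in> {x. f x \<noteq> 0}" by simp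
        then show False using sw that by blast
      qed
      have "f = (\<lambda>x. if x = w then 1 else 0)"
      proof
        fix x show "f x = (if x = w then 1 else 0)" using fw fo by simp
      qed
      then show "f \<in> {\<lambda>x. if x = w then 1 else 0}" by simp
    qed
    then show ?thesis by (rule contractible_sub_sing)
  qed
qed

theorem mainTheorem13:
  fixes V :: "'a set" and E :: "'a \<Rightarrow> 'a \<Rightarrow> bool" and d :: nat
  assumes "simple_graph V E"
    and "connected_graph V E"
    and "chordal V E"
    and "d \<ge> 2"
  shows "contractible (geom_realization (BI d V E))"
  using main_aux[OF assms(1-3)] .



end
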